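(* Let $\mathcal{H}$ be a $d$-dimensional Hilbert space, let $\mathcal{D}(\mathcal{H})$ denote the set of density operators on $\mathcal{H}$, and let $\mathcal{H}_{\mathrm{anc}}\cong\mathcal{H}$ be the Hilbert space of an ancillary system. Suppose the classical pure states $\{|\chi_i\rangle\}_{i=1}^d\subset\mathcal{H}$ form a linearly independent set spanning $\mathcal{H}$. Then there exists an isometry $\Gamma:\mathcal{H}\to\mathcal{H}\otimes\mathcal{H}_{\mathrm{anc}}$ such that for every $\rho\in\mathcal{D}(\mathcal{H})$, $$\mathrm{NN}(\rho)=\mathrm{SN}(\Gamma\rho\Gamma^\dagger),$$ where the Schmidt number is taken with respect to the bipartition $\mathcal{H}\,|\,\mathcal{H}_{\mathrm{anc}}$.
   Context: Given a finite set of "classical" pure states $\{|\chi_i\rangle\}$ spanning $\mathcal{H}$, the nonclassical rank of a pure state $|\psi\rangle$ is $\mathrm{NR}(|\psi\rangle)=\min\{r : |\psi\rangle=\sum_{i=1}^r c_i|\chi_i\rangle,\ c_i\in\mathbb{C}\setminus\{0\}\}$ (the minimal number of classical states needed to write $|\psi\rangle$ as a superposition). The nonclassical number of a mixed state is $\mathrm{NN}(\rho)=\min_{\{p_i,|\psi_i\rangle\}}\max_i \mathrm{NR}(|\psi_i\rangle)$, the minimum being over all pure-state convex decompositions $\rho=\sum_i p_i|\psi_i\rangle\langle\psi_i|$. The Schmidt number of a bipartite state is $\mathrm{SN}(\rho)=\min_{\{p_i,|\psi_i\rangle\}}\max_i\mathrm{SR}(|\psi_i\rangle)$, with $\mathrm{SR}$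 the Schmidt rank and the minimum over pure-state decompositions of $\rho$. *)

theory Defs
  imports Complex_Main
begin

text \<open>The d-dimensional Hilbert space H is C^d; a vector is a function
  nat => complex of which only the entries with index < d matter; an operator on C^d
  is a function nat => nat => complex of which only entries with indices < d matter.
  The tensor product C^dA (x) C^dB is identified with C^(dA*dB), the basis vector
  e_i (x) f_j corresponding to the index i*dB + j.\<close>

definition unit_vector :: "nat \<Rightarrow> (nat \<Rightarrow> complex) \<Rightarrow> bool" where
  "unit_vector d \<psi> \<longleftrightarrow> (\<Sum>j<d. (cmod (\<psi> j))\<^sup>2) = 1"

definition density_op :: "nat \<Rightarrow> (nat \<Rightarrow> nat \<Rightarrow> complex) \<Rightarrow> bool" where
  "density_op d \<rho> \<longleftrightarrow>
     (\<forall>v :: nat \<Rightarrow> complex.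
        let q = (\<Sum>a<d. \<Sum>b<d. cnj (v a) * \<rho> a b * v b) in Im q = 0 \<and> Re q \<ge> 0)
   \<and> (\<Sum>a<d. \<rho> a a) = 1"

definition pure_decomp ::
  "nat \<Rightarrow> (nat \<Rightarrow> nat \<Rightarrow> complex) \<Rightarrow> nat \<Rightarrow> (nat \<Rightarrow> real) \<Rightarrow> (nat \<Rightarrow> nat \<Rightarrow> complex) \<Rightarrow> bool"
  where
  "pure_decomp d \<rho> n p \<psi> \<longleftrightarrow>
     (\<forall>i<n. p i > 0 \<and> unit_vector d (\<psi> i))
   \<and> (\<Sum>i<n. p i) = 1
   \<and> (\<forall>a<d. \<forall>b<d. \<rho> a b = (\<Sum>i<n. complex_of_real (p i) * \<psi> i a * cnj (\<psi> i b)))"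

definition NR :: "nat \<Rightarrow> (nat \<Rightarrow> nat \<Rightarrow> complex) \<Rightarrow> nat \<Rightarrow> (nat \<Rightarrow> complex) \<Rightarrow> nat" where
  "NR d \<chi> m \<psi> = (LEAST r. \<exists>S c. S \<subseteq> {..<m} \<and> card S = r \<and> (\<forall>i\<in>S. c i \<noteq> (0::complex))
        \<and> (\<forall>j<d. \<psi> j = (\<Sum>i\<in>S. c i * \<chi> i j)))"

definition NN :: "nat \<Rightarrow> (nat \<Rightarrow> nat \<Rightarrow> complex) \<Rightarrow> nat \<Rightarrow> (nat \<Rightarrow> nat \<Rightarrow> complex) \<Rightarrow> nat" where
  "NN d \<chi> m \<rho> = Inf {Max ((\<lambda>i. NR d \<chi> m (\<psi> i)) ` {..<n}) | n p \<psi>. pure_decomp d \<rho> n p \<psi>}"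

definition SR :: "nat \<Rightarrow> nat \<Rightarrow> (nat \<Rightarrow> complex) \<Rightarrow> nat" where
  "SR dA dB \<psi> = (LEAST r. \<exists>(a :: nat \<Rightarrow> nat \<Rightarrow> complex) (b :: nat \<Rightarrow> nat \<Rightarrow> complex).
        \<forall>j<dA * dB. \<psi> j = (\<Sum>k<r. a k (j div dB) * b k (j mod dB)))"

definition SN :: "nat \<Rightarrow> nat \<Rightarrow> (nat \<Rightarrow> nat \<Rightarrow> complex) \<Rightarrow> nat" where
  "SN dA dB \<rho> = Inf {Max ((\<lambda>i. SR dA dB (\<psi> i)) ` {..<n}) | n p \<psi>. pure_decomp (dA * dB) \<rho> n p \<psi>}"

definition isometry :: "nat \<Rightarrow> nat \<Rightarrow> (nat \<Rightarrow> nat \<Rightarrow> complex) \<Rightarrow> bool" where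
  "isometry d dout \<Gamma> \<longleftrightarrow>
     (\<forall>a<d. \<forall>b<d. (\<Sum>k<dout. cnj (\<Gamma> k a) * \<Gamma> k b) = (if a = b then 1 else 0))"

definition conj_by :: "nat \<Rightarrow> (nat \<Rightarrow> nat \<Rightarrow> complex) \<Rightarrow> (nat \<Rightarrow> nat \<Rightarrow> complex) \<Rightarrow> (nat \<Rightarrow> nat \<Rightarrow> complex)" where
  "conj_by d \<Gamma> \<rho> = (\<lambda>x y. \<Sum>a<d. \<Sum>b<d. \<Gamma> x a * \<rho> a b * cnj (\<Gamma> y b))"

end

theory Submission
  imports Defs "HOL-Library.Function_Algebras" "HOL-Analysis.Convex"
begin


lemma qf_shift:
  fixes A :: "nat \<Rightarrow> nat \<Rightarrow> complex" and c :: "nat \<Rightarrow> complex"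
  assumes herm: "\<forall>i<Suc n. \<forall>j<Suc n. A j i = cnj (A i j)"
    and a: "A 0 0 = complex_of_real r" and r: "r > 0"
  defines "s \<equiv> (\<Sum>j<n. A 0 (Suc j) * c j)"
  defines "c' \<equiv> (\<lambda>i. case i of 0 \<Rightarrow> - s / A 0 0 | Suc j \<Rightarrow> c j)"
  shows "(\<Sum>i<Suc n. \<Sum>j<Suc n. cnj (c' i) * A i j * c' j)
       = (\<Sum>i<n. \<Sum>j<n. cnj (c i) * (A (Suc i) (Suc j) - A (Suc i) 0 * A 0 (Suc j) / A 0 0) * c j)"
proof -
  have h0: "\<And>i. i < n \<Longrightarrow> A (Suc i) 0 = cnj (A 0 (Suc i))"
  proof -
    fix i assume "i < n"
    then have "A (Suc i) 0 = cnj (A 0 (Suc i))" using herm[rule_format, of 0 "Suc i"] by simp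
    then show "A (Suc i) 0 = cnj (A 0 (Suc i))" .
  qed
  have cs: "(\<Sum>i<n. cnj (c i) * A (Suc i) 0) = cnj s"
    unfolding s_def by (simp add: h0 mult.commute)
  have ca: "cnj (A 0 0) = A 0 0" using a by simp
  have L: "(\<Sum>i<Suc n. \<Sum>j<Suc n. cnj (c' i) * A i j * c' j)
     = cnj (c' 0) * A 0 0 * c' 0 + cnj (c' 0) * s + cnj s * c' 0
       + (\<Sum>i<n. \<Sum>j<n. cnj (c i) * A (Suc i) (Suc j) * c j)"
  proof -
    have 1: "(\<Sum>j<Suc n. cnj (c' 0) * A 0 j * c' j) = cnj (c' 0) * A 0 0 * c' 0 + cnj (c' 0) * s"
      unfolding sum.lessThan_Suc_shift by (simp add: c'_def s_def sum_distrib_left mult.assoc)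
    have 2: "(\<Sum>i<n. cnj (c' (Suc i)) * A (Suc i) 0 * c' 0) = cnj s * c' 0"
    proof -
      have "(\<Sum>i<n. cnj (c' (Suc i)) * A (Suc i) 0 * c' 0) = (\<Sum>i<n. cnj (c i) * A (Suc i) 0) * c' 0"
        unfolding sum_distrib_right by (simp add: c'_def)
      then show ?thesis using cs by simp
    qed
    have 3: "(\<Sum>i<n. \<Sum>j<n. cnj (c' (Suc i)) * A (Suc i) (Suc j) * c' (Suc j))
       = (\<Sum>i<n. \<Sum>j<n. cnj (c i) * A (Suc i) (Suc j) * c j)" by (simp add: c'_def)
    have "(\<Sum>i<Suc n. \<Sum>j<Suc n. cnj (c' i) * A i j * c' j)
      = (\<Sum>j<Suc n. cnj (c' 0) * A 0 j * c' j) + (\<Sum>i<n. \<Sum>j<Suc n. cnj (c' (Suc i)) * A (Suc i) j * c' j)"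
      by (rule sum.lessThan_Suc_shift)
    also have "(\<Sum>i<n. \<Sum>j<Suc n. cnj (c' (Suc i)) * A (Suc i) j * c' j)
      = (\<Sum>i<n. cnj (c' (Suc i)) * A (Suc i) 0 * c' 0) + (\<Sum>i<n. \<Sum>j<n. cnj (c' (Suc i)) * A (Suc i) (Suc j) * c' (Suc j))"
      by (simp only: sum.lessThan_Suc_shift sum.distrib)
    finally show ?thesis unfolding 1 2 3 by (simp add: algebra_simps)
  qed
  have R: "(\<Sum>i<n. \<Sum>j<n. cnj (c i) * (A (Suc i) (Suc j) - A (Suc i) 0 * A 0 (Suc j) / A 0 0) * c j)
     = (\<Sum>i<n. \<Sum>j<n. cnj (c i) * A (Suc i) (Suc j) * c j) - cnj s * s / A 0 0"
  proof -
    have pt: "\<And>i j. cnj (c i) * (A (Suc i) (Suc j) - A (Suc i) 0 * A 0 (Suc j) / A 0 0) * c j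
        = cnj (c i) * A (Suc i) (Suc j) * c j - (cnj (c i) * A (Suc i) 0) * (A 0 (Suc j) * c j) / A 0 0"
      by (simp add: algebra_simps)
    have "(\<Sum>i<n. \<Sum>j<n. cnj (c i) * (A (Suc i) (Suc j) - A (Suc i) 0 * A 0 (Suc j) / A 0 0) * c j)
      = (\<Sum>i<n. \<Sum>j<n. cnj (c i) * A (Suc i) (Suc j) * c j)
        - (\<Sum>i<n. cnj (c i) * A (Suc i) 0) * (\<Sum>j<n. A 0 (Suc j) * c j) / A 0 0"
      unfolding pt sum_subtractf sum_product sum_divide_distrib ..
    then show ?thesis unfolding cs s_def[symmetric] .
  qed
  have a0: "A 0 0 \<noteq> 0" using a r by simp
  have c0: "c' 0 = - s / A 0 0" by (simp add: c'_def)
  show ?thesis unfolding L R c0 using a0 ca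
    by (simp add: field_simps)
qed

lemma chol:
  "\<forall>A :: nat \<Rightarrow> nat \<Rightarrow> complex. (\<forall>i<n. \<forall>j<n. A j i = cnj (A i j))
     \<and> (\<forall>c. (\<exists>i<n. c i \<noteq> 0) \<longrightarrow> Re (\<Sum>i<n. \<Sum>j<n. cnj (c i) * A i j * c j) > 0)
   \<longrightarrow> (\<exists>u. (\<forall>i<n. \<forall>j<n. (\<Sum>k<n. cnj (u i k) * u j k) = A i j) \<and> (\<forall>i k. n \<le> k \<longrightarrow> u i k = 0))"
proof (induction n)
  case 0
  then show ?case by (auto intro!: exI[of _ "\<lambda>_ _. 0"])
next
  case (Suc n)
  show ?case
  proof (intro allI impI, elim conjE)
    fix A :: "nat \<Rightarrow> nat \<Rightarrow> complex"
    assume herm: "\<forall>i<Suc n. \<forall>j<Suc n. A j i = cnj (A i j)"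
      and pd: "\<forall>c. (\<exists>i<Suc n. c i \<noteq> 0) \<longrightarrow> Re (\<Sum>i<Suc n. \<Sum>j<Suc n. cnj (c i) * A i j * c j) > 0"
    define r where "r = Re (A 0 0)"
    have "A 0 0 = cnj (A 0 0)" using herm[rule_format, of 0 0] by simp
    then have a: "A 0 0 = complex_of_real r" unfolding r_def
      by (metis Reals_cnj_iff complex_is_Real_iff of_real_Re)
    have "Re (\<Sum>i<Suc n. \<Sum>j<Suc n. cnj (if i = 0 then 1 else 0) * A i j * (if j = 0 then 1 else 0)) > 0"
      using pd[rule_format, of "\<lambda>i. if i = 0 then 1 else 0"] by auto
    moreover have "(\<Sum>i<Suc n. \<Sum>j<Suc n. cnj (if i = 0 then 1 else 0) * A i j * (if j = 0 then 1 else 0)) = A 0 0"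
      unfolding sum.lessThan_Suc_shift by simp
    ultimately have rpos: "r > 0" unfolding r_def by metis
    define A' where "A' = (\<lambda>i j. A (Suc i) (Suc j) - A (Suc i) 0 * A 0 (Suc j) / A 0 0)"
    have herm': "\<forall>i<n. \<forall>j<n. A' j i = cnj (A' i j)"
    proof (intro allI impI)
      fix i j assume "i < n" "j < n"
      then have "A (Suc j) (Suc i) = cnj (A (Suc i) (Suc j))" "A (Suc j) 0 = cnj (A 0 (Suc j))"
        "A 0 (Suc i) = cnj (A (Suc i) 0)"
        using herm[rule_format, of "Suc i" "Suc j"] herm[rule_format, of 0 "Suc j"]
          herm[rule_format, of "Suc i" 0] by auto
      then show "A' j i = cnj (A' i j)" unfolding A'_def using a by (simp add: mult.commute)
    qed
    have pd': "\<forall>c. (\<exists>i<n. c i \<noteq> 0) \<longrightarrow> Re (\<Sum>i<n. \<Sum>j<n. cnj (c i) * A' i j * c j) > 0"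
    proof (intro allI impI)
      fix c :: "nat \<Rightarrow> complex" assume "\<exists>i<n. c i \<noteq> 0"
      then obtain i where i: "i < n" "c i \<noteq> 0" by auto
      define c' where "c' = (\<lambda>i. case i of 0 \<Rightarrow> - (\<Sum>j<n. A 0 (Suc j) * c j) / A 0 0 | Suc j \<Rightarrow> c j)"
      have "\<exists>i<Suc n. c' i \<noteq> 0" using i by (intro exI[of _ "Suc i"]) (simp add: c'_def)
      then have "Re (\<Sum>i<Suc n. \<Sum>j<Suc n. cnj (c' i) * A i j * c' j) > 0" using pd by blast
      then show "Re (\<Sum>i<n. \<Sum>j<n. cnj (c i) * A' i j * c j) > 0"
        unfolding c'_def qf_shift[OF herm a rpos] A'_def .
    qed
    obtain w where w: "\<forall>i<n. \<forall>j<n. (\<Sum>k<n. cnj (w i k) * w j k) = A' i j"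
      and wz: "\<forall>i k. n \<le> k \<longrightarrow> w i k = 0"
      using Suc.IH herm' pd' by blast
    define sr where "sr = complex_of_real (sqrt r)"
    have sr0: "sr \<noteq> 0" using rpos by (simp add: sr_def)
    have csr: "cnj sr = sr" by (simp add: sr_def)
    have srsq: "sr * sr = A 0 0" using rpos a by (simp add: sr_def flip: of_real_mult)
    define u where "u = (\<lambda>i k. case i of 0 \<Rightarrow> (if k = 0 then sr else 0)
          | Suc j \<Rightarrow> (case k of 0 \<Rightarrow> A 0 (Suc j) / sr | Suc k' \<Rightarrow> w j k'))"
    have gram: "(\<Sum>k<Suc n. cnj (u i k) * u j k) = A i j" if ij: "i < Suc n" "j < Suc n" for i j
    proof (cases i)
      case 0
      then show ?thesis
      proof (cases j)
        case 0
        then show ?thesis using \<open>i = 0\<close> csr srsq unfolding u_def sum.lessThan_Suc_shift by simp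
      next
        case (Suc j')
        then show ?thesis using \<open>i = 0\<close> csr sr0 unfolding u_def sum.lessThan_Suc_shift by simp
      qed
    next
      case (Suc i')
      have hi: "A (Suc i') 0 = cnj (A 0 (Suc i'))"
        using herm[rule_format, of 0 "Suc i'"] ij Suc by simp
      then show ?thesis
      proof (cases j)
        case 0
        then show ?thesis using Suc csr sr0 hi unfolding u_def sum.lessThan_Suc_shift by simp
      next
        case (Suc j')
        have "(\<Sum>k<n. cnj (w i' k) * w j' k) = A' i' j'" using w ij \<open>i = Suc i'\<close> Suc by simp
        then show ?thesis using Suc \<open>i = Suc i'\<close> csr sr0 hi srsq
          unfolding u_def sum.lessThan_Suc_shift A'_def
          by (simp add: field_simps)
      qed
    qed
    have supp: "\<forall>i k. Suc n \<le> k \<longrightarrow> u i k = 0"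
      using wz by (auto simp: u_def split: nat.split)
    show "\<exists>u. (\<forall>i<Suc n. \<forall>j<Suc n. (\<Sum>k<Suc n. cnj (u i k) * u j k) = A i j) \<and>
             (\<forall>i k. Suc n \<le> k \<longrightarrow> u i k = 0)"
      using gram supp by blast
  qed
qed




definition app :: "nat \<Rightarrow> (nat \<Rightarrow> nat \<Rightarrow> complex) \<Rightarrow> (nat \<Rightarrow> complex) \<Rightarrow> nat \<Rightarrow> complex" where
  "app n G x = (\<lambda>k. \<Sum>a<n. G k a * x a)"
definition adj :: "nat \<Rightarrow> (nat \<Rightarrow> nat \<Rightarrow> complex) \<Rightarrow> (nat \<Rightarrow> complex) \<Rightarrow> nat \<Rightarrow> complex" where
  "adj m G y = (\<lambda>a. \<Sum>k<m. cnj (G k a) * y k)"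
definition ip :: "nat \<Rightarrow> (nat \<Rightarrow> complex) \<Rightarrow> (nat \<Rightarrow> complex) \<Rightarrow> complex" where
  "ip n f g = (\<Sum>k<n. cnj (f k) * g k)"

lemma ip_app: "ip m (app n G x) y = ip n x (adj m G y)"
  unfolding ip_def app_def adj_def
  by (simp add: sum_distrib_left sum_distrib_right sum.swap[of _ "{..<m}"] mult_ac)

lemma adj_app:
  assumes "isometry n m G" "a < n"
  shows "adj m G (app n G x) a = x a"
proof -
  have "adj m G (app n G x) a = (\<Sum>b<n. (\<Sum>k<m. cnj (G k a) * G k b) * x b)"
    unfolding adj_def app_def
    by (simp add: sum_distrib_left sum_distrib_right sum.swap[of _ "{..<m}"] mult_ac)
  also have "\<dots> = (\<Sum>b<n. (if a = b then x b else 0))"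
    using assms unfolding isometry_def by (intro sum.cong) auto
  also have "\<dots> = x a" using assms(2) by simp
  finally show ?thesis .
qed

lemma ip_self: "ip n f f = complex_of_real (\<Sum>k<n. (cmod (f k))\<^sup>2)"
proof -
  have "\<And>k. cnj (f k) * f k = complex_of_real ((cmod (f k))\<^sup>2)"
    by (simp only: complex_norm_square mult.commute)
  then show ?thesis unfolding ip_def of_real_sum by (simp del: of_real_power)
qed

lemma unit_ip: "unit_vector n f \<longleftrightarrow> ip n f f = 1"
  unfolding unit_vector_def ip_self by (metis of_real_1 of_real_eq_iff)

lemma ip_cong: "(\<And>k. k < n \<Longrightarrow> f k = f' k) \<Longrightarrow> (\<And>k. k < n \<Longrightarrow> g k = g' k) \<Longrightarrow> ip n f g = ip n f' g'"
  unfolding ip_def by simp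

lemma ip_app_app:
  assumes "isometry n m G"
  shows "ip m (app n G x) (app n G y) = ip n x y"
  unfolding ip_app using adj_app[OF assms] by (intro ip_cong) auto

lemma ip_zero_imp: "ip n f f = 0 \<Longrightarrow> k < n \<Longrightarrow> f k = 0"
proof -
  assume h: "ip n f f = 0" "k < n"
  then have "(\<Sum>k<n. (cmod (f k))\<^sup>2) = 0" unfolding ip_self by (simp only: of_real_eq_0_iff)
  then have "(cmod (f k))\<^sup>2 = 0" using h(2) by (subst (asm) sum_nonneg_eq_0_iff) auto
  then show "f k = 0" by simp
qed




lemma sum_rank1:
  fixes f g :: "nat \<Rightarrow> complex" and q :: "nat \<Rightarrow> complex"
  shows "(\<Sum>x<m. \<Sum>y<m. f x * (\<Sum>i<n. q i * h i x * k i y) * g y)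
       = (\<Sum>i<n. q i * (\<Sum>x<m. f x * h i x) * (\<Sum>y<m. k i y * g y))"
proof -
  have "(\<Sum>x<m. \<Sum>y<m. f x * (\<Sum>i<n. q i * h i x * k i y) * g y)
      = (\<Sum>x<m. \<Sum>y<m. \<Sum>i<n. q i * (f x * h i x) * (k i y * g y))"
    by (simp add: sum_distrib_left sum_distrib_right mult_ac)
  also have "\<dots> = (\<Sum>x<m. \<Sum>i<n. \<Sum>y<m. q i * (f x * h i x) * (k i y * g y))"
    by (simp only: sum.swap[of _ "{..<m}" "{..<n}"])
  also have "\<dots> = (\<Sum>i<n. \<Sum>x<m. \<Sum>y<m. q i * (f x * h i x) * (k i y * g y))"
    by (rule sum.swap)
  also have "\<dots> = (\<Sum>i<n. q i * (\<Sum>x<m. f x * h i x) * (\<Sum>y<m. k i y * g y))"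
    by (simp add: sum_distrib_left sum_distrib_right mult_ac)
  finally show ?thesis .
qed

lemma sum_sandwich:
  fixes f g :: "nat \<Rightarrow> complex"
  shows "(\<Sum>x<m. \<Sum>y<m. f x * (\<Sum>a<d. \<Sum>b<d. G x a * R a b * H y b) * g y)
       = (\<Sum>a<d. \<Sum>b<d. (\<Sum>x<m. f x * G x a) * R a b * (\<Sum>y<m. H y b * g y))"
proof -
  have "(\<Sum>x<m. \<Sum>y<m. f x * (\<Sum>a<d. \<Sum>b<d. G x a * R a b * H y b) * g y)
      = (\<Sum>x<m. \<Sum>y<m. \<Sum>a<d. (\<Sum>b<d. (f x * G x a) * R a b * (H y b * g y)))"
    by (simp add: sum_distrib_left sum_distrib_right mult_ac)
  also have "\<dots> = (\<Sum>x<m. \<Sum>a<d. \<Sum>y<m. (\<Sum>b<d. (f x * G x a) * R a b * (H y b * g y)))"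
    by (simp only: sum.swap[of _ "{..<m}" "{..<d}"])
  also have "\<dots> = (\<Sum>a<d. \<Sum>x<m. \<Sum>y<m. (\<Sum>b<d. (f x * G x a) * R a b * (H y b * g y)))"
    by (rule sum.swap)
  also have "\<dots> = (\<Sum>a<d. \<Sum>x<m. \<Sum>b<d. (\<Sum>y<m. (f x * G x a) * R a b * (H y b * g y)))"
    by (simp only: sum.swap[of _ "{..<m}" "{..<d}"])
  also have "\<dots> = (\<Sum>a<d. \<Sum>b<d. \<Sum>x<m. (\<Sum>y<m. (f x * G x a) * R a b * (H y b * g y)))"
    by (simp only: sum.swap[of _ "{..<m}" "{..<d}"])
  also have "\<dots> = (\<Sum>a<d. \<Sum>b<d. (\<Sum>x<m. f x * G x a) * R a b * (\<Sum>y<m. H y b * g y))"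
    by (simp add: sum_distrib_left sum_distrib_right mult_ac)
  finally show ?thesis .
qed

lemma decomp_fwd:
  assumes iso: "isometry d m G" and pd: "pure_decomp d \<rho> n p \<psi>"
  shows "pure_decomp m (conj_by d G \<rho>) n p (\<lambda>i. app d G (\<psi> i))"
proof -
  have P: "\<forall>i<n. p i > 0 \<and> unit_vector d (\<psi> i)" "(\<Sum>i<n. p i) = 1"
    and R: "\<forall>a<d. \<forall>b<d. \<rho> a b = (\<Sum>i<n. complex_of_real (p i) * \<psi> i a * cnj (\<psi> i b))"
    using pd unfolding pure_decomp_def by auto
  have U: "\<forall>i<n. p i > 0 \<and> unit_vector m (app d G (\<psi> i))"
    using P(1) unfolding unit_ip ip_app_app[OF iso] by auto
  have E: "conj_by d G \<rho> x y = (\<Sum>i<n. complex_of_real (p i) * app d G (\<psi> i) x * cnj (app d G (\<psi> i) y))"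
    for x y
  proof -
    have "conj_by d G \<rho> x y = (\<Sum>a<d. \<Sum>b<d. G x a * (\<Sum>i<n. complex_of_real (p i) * \<psi> i a * cnj (\<psi> i b)) * cnj (G y b))"
      unfolding conj_by_def using R by (intro sum.cong refl) auto
    also have "\<dots> = (\<Sum>i<n. complex_of_real (p i) * (\<Sum>a<d. G x a * \<psi> i a) * (\<Sum>b<d. cnj (\<psi> i b) * cnj (G y b)))"
      by (rule sum_rank1)
    also have "\<dots> = (\<Sum>i<n. complex_of_real (p i) * app d G (\<psi> i) x * cnj (app d G (\<psi> i) y))"
      unfolding app_def by (simp add: mult.commute)
    finally show ?thesis .
  qed
  show ?thesis unfolding pure_decomp_def using U P(2) E by auto
qed

lemma ip_diff_left: "ip n (\<lambda>k. f k - g k) h = ip n f h - ip n g h"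
  unfolding ip_def by (simp add: algebra_simps sum_subtractf)

lemma ip_cnj: "ip n g f = cnj (ip n f g)"
  unfolding ip_def by (simp add: mult.commute)

lemma mult_ind1: "(x::complex) * (if P then 1 else 0) = (if P then x else 0)" by simp
lemma mult_ind2: "(if P then 1 else 0) * (x::complex) = (if P then x else 0)" by simp

lemma decomp_bwd:
  assumes iso: "isometry d m G" and pd: "pure_decomp m (conj_by d G \<rho>) n p \<phi>"
  shows "pure_decomp d \<rho> n p (\<lambda>i. adj m G (\<phi> i))
       \<and> (\<forall>i<n. \<forall>k<m. \<phi> i k = app d G (adj m G (\<phi> i)) k)"
proof -
  let ?C = "conj_by d G \<rho>"
  have P: "\<forall>i<n. p i > 0 \<and> unit_vector m (\<phi> i)" "(\<Sum>i<n. p i) = 1"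
    and R: "\<forall>x<m. \<forall>y<m. ?C x y = (\<Sum>i<n. complex_of_real (p i) * \<phi> i x * cnj (\<phi> i y))"
    using pd unfolding pure_decomp_def by auto
  have I: "\<And>a b. a < d \<Longrightarrow> b < d \<Longrightarrow> (\<Sum>k<m. cnj (G k a) * G k b) = (if a = b then 1 else 0)"
    using iso unfolding isometry_def by auto
  have S: "(\<Sum>x<m. \<Sum>y<m. f x * ?C x y * g y)
      = (\<Sum>a<d. \<Sum>b<d. (\<Sum>x<m. f x * G x a) * \<rho> a b * (\<Sum>y<m. cnj (G y b) * g y))" for f g
    unfolding conj_by_def by (rule sum_sandwich)
  have S2: "(\<Sum>x<m. \<Sum>y<m. f x * ?C x y * g y)
      = (\<Sum>i<n. complex_of_real (p i) * (\<Sum>x<m. f x * \<phi> i x) * (\<Sum>y<m. cnj (\<phi> i y) * g y))" for f g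
  proof -
    have "(\<Sum>x<m. \<Sum>y<m. f x * ?C x y * g y)
      = (\<Sum>x<m. \<Sum>y<m. f x * (\<Sum>i<n. complex_of_real (p i) * \<phi> i x * cnj (\<phi> i y)) * g y)"
      using R by (intro sum.cong refl) auto
    also have "\<dots> = (\<Sum>i<n. complex_of_real (p i) * (\<Sum>x<m. f x * \<phi> i x) * (\<Sum>y<m. cnj (\<phi> i y) * g y))" by (rule sum_rank1)
    finally show ?thesis .
  qed
  have rho: "\<rho> a b = (\<Sum>i<n. complex_of_real (p i) * adj m G (\<phi> i) a * cnj (adj m G (\<phi> i) b))"
    if ab: "a < d" "b < d" for a b
  proof -
    have "(\<Sum>x<m. \<Sum>y<m. cnj (G x a) * ?C x y * G y b)
       = (\<Sum>a'<d. \<Sum>b'<d. (\<Sum>x<m. cnj (G x a) * G x a') * \<rho> a' b' * (\<Sum>y<m. cnj (G y b') * G y b))"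
      by (rule S)
    also have "\<dots> = (\<Sum>a'<d. \<Sum>b'<d. (if a = a' then 1 else 0) * \<rho> a' b' * (if b' = b then 1 else 0))"
      using I ab by (intro sum.cong refl) auto
    also have "\<dots> = \<rho> a b" using ab by (simp add: mult_ind1 mult_ind2)
    finally have 1: "(\<Sum>x<m. \<Sum>y<m. cnj (G x a) * ?C x y * G y b) = \<rho> a b" .
    have "(\<Sum>x<m. \<Sum>y<m. cnj (G x a) * ?C x y * G y b)
       = (\<Sum>i<n. complex_of_real (p i) * (\<Sum>x<m. cnj (G x a) * \<phi> i x) * (\<Sum>y<m. cnj (\<phi> i y) * G y b))"
      by (rule S2)
    also have "\<dots> = (\<Sum>i<n. complex_of_real (p i) * adj m G (\<phi> i) a * cnj (adj m G (\<phi> i) b))"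
      unfolding adj_def by (simp add: mult.commute)
    finally show ?thesis using 1 by simp
  qed
  have range: "\<phi> i k = app d G (adj m G (\<phi> i)) k" if ik: "i < n" "k < m" for i k
  proof -
    define w where "w = (\<lambda>k. \<phi> i k - app d G (adj m G (\<phi> i)) k)"
    have aw: "adj m G w a = 0" if "a < d" for a
    proof -
      have "adj m G w a = adj m G (\<phi> i) a - adj m G (app d G (adj m G (\<phi> i))) a"
        unfolding w_def adj_def by (simp add: algebra_simps sum_subtractf)
      then show ?thesis using adj_app[OF iso that] by simp
    qed
    have "(\<Sum>x<m. \<Sum>y<m. cnj (w x) * ?C x y * w y)
       = (\<Sum>a<d. \<Sum>b<d. (\<Sum>x<m. cnj (w x) * G x a) * \<rho> a b * (\<Sum>y<m. cnj (G y b) * w y))"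
      by (rule S)
    also have "\<dots> = 0"
    proof -
      have "(\<Sum>y<m. cnj (G y b) * w y) = 0" if "b < d" for b
        using aw[OF that] unfolding adj_def .
      then show ?thesis by simp
    qed
    finally have z: "(\<Sum>x<m. \<Sum>y<m. cnj (w x) * ?C x y * w y) = 0" .
    have "(\<Sum>x<m. \<Sum>y<m. cnj (w x) * ?C x y * w y)
       = (\<Sum>l<n. complex_of_real (p l) * (\<Sum>x<m. cnj (w x) * \<phi> l x) * (\<Sum>y<m. cnj (\<phi> l y) * w y))"
      by (rule S2)
    also have "\<dots> = (\<Sum>l<n. complex_of_real (p l * (cmod (ip m (\<phi> l) w))\<^sup>2))"
    proof (intro sum.cong refl)
      fix l
      have "(\<Sum>x<m. cnj (w x) * \<phi> l x) = cnj (ip m (\<phi> l) w)" using ip_cnj[of m "\<phi> l" w]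
        unfolding ip_def by simp
      then show "complex_of_real (p l) * (\<Sum>x<m. cnj (w x) * \<phi> l x) * (\<Sum>y<m. cnj (\<phi> l y) * w y)
          = complex_of_real (p l * (cmod (ip m (\<phi> l) w))\<^sup>2)"
        unfolding ip_def[symmetric] using complex_norm_square[of "ip m (\<phi> l) w"]
        by (simp only: of_real_mult mult_ac)
    qed
    also have "\<dots> = complex_of_real (\<Sum>l<n. p l * (cmod (ip m (\<phi> l) w))\<^sup>2)" by (simp only: of_real_sum)
    finally have "(\<Sum>l<n. p l * (cmod (ip m (\<phi> l) w))\<^sup>2) = 0" using z by (metis of_real_eq_0_iff)
    then have "p i * (cmod (ip m (\<phi> i) w))\<^sup>2 = 0"
      using P(1) ik by (subst (asm) sum_nonneg_eq_0_iff) auto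
    then have o1: "ip m (\<phi> i) w = 0" using P(1) ik by auto
    have "ip m w w = ip m (\<phi> i) w - ip m (app d G (adj m G (\<phi> i))) w"
      unfolding w_def ip_diff_left ..
    also have "\<dots> = 0 - ip d (adj m G (\<phi> i)) (adj m G w)" unfolding o1 ip_app ..
    also have "ip d (adj m G (\<phi> i)) (adj m G w) = 0" unfolding ip_def using aw by simp
    finally have "ip m w w = 0" by simp
    then have "w k = 0" using ip_zero_imp ik by blast
    then show ?thesis unfolding w_def by simp
  qed
  have unit: "unit_vector d (adj m G (\<phi> i))" if "i < n" for i
  proof -
    have "ip d (adj m G (\<phi> i)) (adj m G (\<phi> i)) = ip m (app d G (adj m G (\<phi> i))) (app d G (adj m G (\<phi> i)))"
      using ip_app_app[OF iso] by simp
    also have "\<dots> = ip m (\<phi> i) (\<phi> i)" using range[OF that] by (intro ip_cong) auto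
    also have "\<dots> = 1" using P(1) that unfolding unit_ip by auto
    finally show ?thesis unfolding unit_ip .
  qed
  show ?thesis unfolding pure_decomp_def using P unit rho range by auto
qed

lemma SR_cong: "(\<And>j. j < dA * dB \<Longrightarrow> f j = g j) \<Longrightarrow> SR dA dB f = SR dA dB g"
  unfolding SR_def by simp

lemma NN_SN_gen:
  assumes iso: "isometry d (d * d) G"
    and hSR: "\<And>\<psi>. SR d d (app d G \<psi>) = NR d \<chi> d \<psi>"
  shows "NN d \<chi> d \<rho> = SN d d (conj_by d G \<rho>)"
proof -
  have "{Max ((\<lambda>i. NR d \<chi> d (\<psi> i)) ` {..<n}) | n p \<psi>. pure_decomp d \<rho> n p \<psi>}
      = {Max ((\<lambda>i. SR d d (\<psi> i)) ` {..<n}) | n p \<psi>. pure_decomp (d * d) (conj_by d G \<rho>) n p \<psi>}"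
  proof (intro set_eqI iffI)
    fix z assume "z \<in> {Max ((\<lambda>i. NR d \<chi> d (\<psi> i)) ` {..<n}) | n p \<psi>. pure_decomp d \<rho> n p \<psi>}"
    then obtain n p \<psi> where z: "z = Max ((\<lambda>i. NR d \<chi> d (\<psi> i)) ` {..<n})" and pd: "pure_decomp d \<rho> n p \<psi>"
      by auto
    have "pure_decomp (d * d) (conj_by d G \<rho>) n p (\<lambda>i. app d G (\<psi> i))"
      by (rule decomp_fwd[OF iso pd])
    moreover have "z = Max ((\<lambda>i. SR d d (app d G (\<psi> i))) ` {..<n})" unfolding z hSR ..
    ultimately show "z \<in> {Max ((\<lambda>i. SR d d (\<psi> i)) ` {..<n}) | n p \<psi>. pure_decomp (d * d) (conj_by d G \<rho>) n p \<psi>}"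
      by (intro CollectI exI[of _ n] exI[of _ p] exI[of _ "\<lambda>i. app d G (\<psi> i)"]) simp
  next
    fix z assume "z \<in> {Max ((\<lambda>i. SR d d (\<psi> i)) ` {..<n}) | n p \<psi>. pure_decomp (d * d) (conj_by d G \<rho>) n p \<psi>}"
    then obtain n p \<phi> where z: "z = Max ((\<lambda>i. SR d d (\<phi> i)) ` {..<n})"
      and pd: "pure_decomp (d * d) (conj_by d G \<rho>) n p \<phi>"
      by auto
    note D = decomp_bwd[OF iso pd]
    have "(\<lambda>i. SR d d (\<phi> i)) ` {..<n} = (\<lambda>i. NR d \<chi> d (adj (d * d) G (\<phi> i))) ` {..<n}"
    proof (intro image_cong refl)
      fix i assume "i \<in> {..<n}"
      then have "SR d d (\<phi> i) = SR d d (app d G (adj (d * d) G (\<phi> i)))"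
        using D by (intro SR_cong) auto
      then show "SR d d (\<phi> i) = NR d \<chi> d (adj (d * d) G (\<phi> i))" unfolding hSR .
    qed
    then show "z \<in> {Max ((\<lambda>i. NR d \<chi> d (\<psi> i)) ` {..<n}) | n p \<psi>. pure_decomp d \<rho> n p \<psi>}"
      using D z by (intro CollectI exI[of _ n] exI[of _ p] exI[of _ "\<lambda>i. adj (d * d) G (\<phi> i)"]) simp
  qed
  then show ?thesis unfolding NN_def SN_def by simp
qed




interpretation fv: vector_space "\<lambda>(c::complex) (f::nat\<Rightarrow>complex) x. c * f x"
  by unfold_locales (auto simp: fun_eq_iff algebra_simps)

lemma fv_sum_apply: "(\<Sum>i\<in>S. (f i :: nat \<Rightarrow> complex)) x = (\<Sum>i\<in>S. f i x)"
  by (induction S rule: infinite_finite_induct) auto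

lemma NR_char:
  fixes \<chi> :: "nat \<Rightarrow> nat \<Rightarrow> complex" and c :: "nat \<Rightarrow> complex"
  assumes lin_indep: "\<forall>c :: nat \<Rightarrow> complex.
              (\<forall>j<d. (\<Sum>i<d. c i * \<chi> i j) = 0) \<longrightarrow> (\<forall>i<d. c i = 0)"
    and psi: "\<forall>j<d. \<psi> j = (\<Sum>i<d. c i * \<chi> i j)"
  shows "NR d \<chi> d \<psi> = card {i. i < d \<and> c i \<noteq> 0}"
proof -
  let ?S0 = "{i. i < d \<and> c i \<noteq> 0}"
  let ?P = "\<lambda>r. \<exists>S c. S \<subseteq> {..<d} \<and> card S = r \<and> (\<forall>i\<in>S. c i \<noteq> (0::complex))
        \<and> (\<forall>j<d. \<psi> j = (\<Sum>i\<in>S. c i * \<chi> i j))"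
  have P0: "?P (card ?S0)"
  proof (intro exI conjI)
    show "?S0 \<subseteq> {..<d}" by auto
    show "\<forall>j<d. \<psi> j = (\<Sum>i\<in>?S0. c i * \<chi> i j)"
    proof (intro allI impI)
      fix j assume "j < d"
      then have "\<psi> j = (\<Sum>i<d. c i * \<chi> i j)" using psi by auto
      also have "\<dots> = (\<Sum>i\<in>?S0. c i * \<chi> i j)"
        by (rule sum.mono_neutral_right) auto
      finally show "\<psi> j = (\<Sum>i\<in>?S0. c i * \<chi> i j)" .
    qed
  qed auto
  have min: "card ?S0 \<le> r" if "?P r" for r
  proof -
    obtain S c' where S: "S \<subseteq> {..<d}" "card S = r" "\<forall>i\<in>S. c' i \<noteq> 0"
      "\<forall>j<d. \<psi> j = (\<Sum>i\<in>S. c' i * \<chi> i j)" using \<open>?P r\<close> by blast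
    define e where "e = (\<lambda>i. c i - (if i \<in> S then c' i else 0))"
    have "\<forall>j<d. (\<Sum>i<d. e i * \<chi> i j) = 0"
    proof (intro allI impI)
      fix j assume j: "j < d"
      have "(\<Sum>i<d. (if i \<in> S then c' i else 0) * \<chi> i j) = (\<Sum>i\<in>S. c' i * \<chi> i j)"
      proof -
        have "(\<Sum>i<d. (if i \<in> S then c' i else 0) * \<chi> i j) = (\<Sum>i<d. if i \<in> S then c' i * \<chi> i j else 0)"
          by (intro sum.cong) auto
        also have "\<dots> = (\<Sum>i\<in>{..<d} \<inter> S. c' i * \<chi> i j)" by (simp add: sum.inter_restrict)
        also have "{..<d} \<inter> S = S" using S(1) by auto
        finally show ?thesis .
      qed
      then show "(\<Sum>i<d. e i * \<chi> i j) = 0"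
        unfolding e_def using psi S(4) j by (simp add: algebra_simps sum_subtractf)
    qed
    then have "\<forall>i<d. e i = 0" using lin_indep by blast
    then have "?S0 = S" using S(1,3) unfolding e_def by (auto split: if_splits)
    then show ?thesis using S(2) by simp
  qed
  show ?thesis unfolding NR_def
    by (rule Least_equality) (use P0 min in auto)
qed

lemma divmod:
  fixes x y d :: nat
  assumes "x < d" "y < d"
  shows "x * d + y < d * d \<and> (x * d + y) div d = x \<and> (x * d + y) mod d = y"
proof -
  have "x * d + y < x * d + d" using assms by simp
  also have "\<dots> = (x + 1) * d" by simp
  also have "\<dots> \<le> d * d" using assms by (intro mult_right_mono) auto
  finally show ?thesis using assms by simp
qed

lemma SR_char:
  fixes u v :: "nat \<Rightarrow> nat \<Rightarrow> complex" and c :: "nat \<Rightarrow> complex"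
  assumes indep_u: "\<forall>c :: nat \<Rightarrow> complex. (\<forall>x<d. (\<Sum>i<d. c i * u i x) = 0) \<longrightarrow> (\<forall>i<d. c i = 0)"
    and dual: "\<forall>i<d. \<exists>w. \<forall>i'<d. (\<Sum>y<d. v i' y * w y) = (if i' = i then 1 else 0)"
  shows "SR d d (\<lambda>k. \<Sum>i<d. c i * u i (k div d) * v i (k mod d)) = card {i. i < d \<and> c i \<noteq> 0}"
proof -
  let ?S0 = "{i. i < d \<and> c i \<noteq> 0}"
  let ?f = "\<lambda>k. \<Sum>i<d. c i * u i (k div d) * v i (k mod d)"
  let ?P = "\<lambda>r. \<exists>(a :: nat \<Rightarrow> nat \<Rightarrow> complex) (b :: nat \<Rightarrow> nat \<Rightarrow> complex).
        \<forall>j<d * d. ?f j = (\<Sum>k<r. a k (j div d) * b k (j mod d))"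
  have fin: "finite ?S0" by auto
  obtain h where h: "bij_betw h {0..<card ?S0} ?S0" using ex_bij_betw_nat_finite[OF fin] by blast
  have P0: "?P (card ?S0)"
  proof (intro exI allI impI)
    fix j
    have "?f j = (\<Sum>i\<in>?S0. c i * u i (j div d) * v i (j mod d))"
      by (rule sum.mono_neutral_right) auto
    also have "\<dots> = (\<Sum>k\<in>{0..<card ?S0}. c (h k) * u (h k) (j div d) * v (h k) (j mod d))"
      by (rule sum.reindex_bij_betw[OF h, symmetric])
    also have "\<dots> = (\<Sum>k<card ?S0. (\<lambda>k x. c (h k) * u (h k) x) k (j div d) * (\<lambda>k y. v (h k) y) k (j mod d))"
      by (simp add: atLeast0LessThan)
    finally show "?f j = (\<Sum>k<card ?S0. (\<lambda>k x. c (h k) * u (h k) x) k (j div d) * (\<lambda>k y. v (h k) y) k (j mod d))" .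
  qed
  have min: "card ?S0 \<le> r" if "?P r" for r
  proof -
    obtain a b where ab: "\<forall>j<d * d. ?f j = (\<Sum>k<r. a k (j div d) * b k (j mod d))" using \<open>?P r\<close> by blast
    have xy: "(\<Sum>i<d. c i * u i x * v i y) = (\<Sum>k<r. a k x * b k y)" if "x < d" "y < d" for x y
    proof -
      have j: "x * d + y < d * d" "(x * d + y) div d = x" "(x * d + y) mod d = y"
        using divmod[OF that] by auto
      show ?thesis using ab[rule_format, OF j(1)] unfolding j(2,3) .
    qed
    define U where "U = (\<lambda>i x. if x < d then u i x else 0)"
    define A where "A = (\<lambda>k x. if x < d then a k x else (0::complex))"
    have inU: "U i0 \<in> fv.span (A ` {..<r})" if i0: "i0 \<in> ?S0" for i0
    proof -
      obtain w where w: "\<forall>i'<d. (\<Sum>y<d. v i' y * w y) = (if i' = i0 then 1 else 0)"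
        using dual i0 by auto
      define \<beta> where "\<beta> = (\<lambda>k. (\<Sum>y<d. b k y * w y) / c i0)"
      have "U i0 = (\<Sum>k<r. (\<lambda>x. \<beta> k * A k x))"
      proof
        fix x
        show "U i0 x = (\<Sum>k<r. (\<lambda>x. \<beta> k * A k x)) x"
        proof (cases "x < d")
          case True
          have "(\<Sum>k<r. a k x * (\<Sum>y<d. b k y * w y)) = (\<Sum>y<d. (\<Sum>k<r. a k x * b k y) * w y)"
            by (simp add: sum_distrib_left sum_distrib_right sum.swap[of _ "{..<r}"] mult_ac)
          also have "\<dots> = (\<Sum>y<d. (\<Sum>i<d. c i * u i x * v i y) * w y)"
            using xy True by simp
          also have "\<dots> = (\<Sum>y<d. \<Sum>i<d. c i * u i x * (v i y * w y))"
            by (simp add: sum_distrib_right sum_distrib_left mult_ac)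
          also have "\<dots> = (\<Sum>i<d. \<Sum>y<d. c i * u i x * (v i y * w y))"
            by (rule sum.swap)
          also have "\<dots> = (\<Sum>i<d. c i * u i x * (\<Sum>y<d. v i y * w y))"
            by (simp add: sum_distrib_left)
          also have "\<dots> = (\<Sum>i<d. if i = i0 then c i * u i x else 0)"
            using w by (intro sum.cong) auto
          also have "\<dots> = c i0 * u i0 x" using i0 by simp
          finally have "(\<Sum>k<r. a k x * (\<Sum>y<d. b k y * w y)) = c i0 * u i0 x" .
          then show ?thesis using True i0 unfolding U_def A_def \<beta>_def fv_sum_apply
            by (simp add: sum_divide_distrib[symmetric] mult_ac)
        next
          case False
          then show ?thesis unfolding U_def A_def fv_sum_apply by simp
        qed
      qed
      also have "\<dots> \<in> fv.span (A ` {..<r})"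
        by (intro fv.span_sum fv.span_scale fv.span_base) auto
      finally show ?thesis .
    qed
    have injU: "inj_on U ?S0"
    proof
      fix i i' assume ii: "i \<in> ?S0" "i' \<in> ?S0" "U i = U i'"
      show "i = i'"
      proof (rule ccontr)
        assume ne: "i \<noteq> i'"
        define e where "e = (\<lambda>k. (if k = i then 1 else 0) - (if k = i' then 1 else (0::complex)))"
        have "\<forall>x<d. (\<Sum>k<d. e k * u k x) = 0"
        proof (intro allI impI)
          fix x assume "x < d"
          then have "u i x = u i' x" using fun_cong[OF ii(3), of x] unfolding U_def by simp
          moreover have "(\<Sum>k<d. e k * u k x) = (\<Sum>k<d. (if k = i then u k x else 0)) - (\<Sum>k<d. (if k = i' then u k x else 0))"
            unfolding e_def by (simp only: left_diff_distrib sum_subtractf mult_ind2)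
          ultimately show "(\<Sum>k<d. e k * u k x) = 0" using ii by simp
        qed
        then have "e i = 0" using indep_u ii by auto
        then show False using ne unfolding e_def by simp
      qed
    qed
    have indU: "fv.independent (U ` ?S0)"
    proof (rule fv.independent_if_scalars_zero)
      show "finite (U ` ?S0)" by auto
      fix g z assume g: "(\<Sum>x\<in>U ` ?S0. (\<lambda>y. g x * x y)) = 0" and z: "z \<in> U ` ?S0"
      define e where "e = (\<lambda>i. if i \<in> ?S0 then g (U i) else 0)"
      have "\<forall>x<d. (\<Sum>i<d. e i * u i x) = 0"
      proof (intro allI impI)
        fix x assume x: "x < d"
        have "0 = (\<Sum>y\<in>U ` ?S0. (\<lambda>y'. g y * y y')) x" using g by simp
        also have "\<dots> = (\<Sum>i\<in>?S0. g (U i) * U i x)"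
          unfolding fv_sum_apply by (simp add: sum.reindex[OF injU])
        also have "\<dots> = (\<Sum>i<d. e i * u i x)"
          unfolding e_def U_def using x
          by (intro sum.mono_neutral_cong_left) auto
        finally show "(\<Sum>i<d. e i * u i x) = 0" by simp
      qed
      then have "\<forall>i<d. e i = 0" using indep_u by blast
      then show "g z = 0" using z unfolding e_def by auto
    qed
    have "card (U ` ?S0) \<le> card (A ` {..<r})"
      using fv.independent_span_bound[OF _ indU] inU by auto
    also have "\<dots> \<le> r" using card_image_le[of "{..<r}" A] by simp
    finally show ?thesis using card_image[OF injU] by simp
  qed
  show ?thesis unfolding SR_def
    by (rule Least_equality) (use P0 min in auto)
qed




lemma sum_md: "(\<Sum>k<m * d. f k) = (\<Sum>x<m. \<Sum>y<d. f (x * d + y))" for m d :: nat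
proof (induction m)
  case 0 then show ?case by simp
next
  case (Suc m)
  have "(\<Sum>k<Suc m * d. f k) = (\<Sum>k<m * d. f k) + (\<Sum>k\<in>{m * d..<m * d + d}. f k)"
    by (simp add: add.commute lessThan_atLeast0 sum.atLeastLessThan_concat)
  also have "(\<Sum>k\<in>{m * d..<m * d + d}. f k) = (\<Sum>y<d. f (m * d + y))"
  proof -
    have "(\<Sum>k\<in>{0 + m * d..<d + m * d}. f k) = (\<Sum>y\<in>{0..<d}. f (y + m * d))"
      by (rule sum.shift_bounds_nat_ivl)
    then show ?thesis by (simp add: lessThan_atLeast0 add.commute)
  qed
  finally show ?case using Suc by simp
qed

lemma sum_dd: "(\<Sum>k<d * d. f k) = (\<Sum>x<d. \<Sum>y<d. f (x * d + y))" for d :: nat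
  by (rule sum_md)

lemma sum_bilin:
  fixes \<alpha> \<beta> :: "nat \<Rightarrow> complex" and m d :: nat
  shows "(\<Sum>x<m. cnj (\<Sum>i<d. \<alpha> i * f i x) * (\<Sum>j<d. \<beta> j * f j x))
       = (\<Sum>i<d. \<Sum>j<d. cnj (\<alpha> i) * \<beta> j * (\<Sum>x<m. cnj (f i x) * f j x))"
proof -
  have "(\<Sum>x<m. cnj (\<Sum>i<d. \<alpha> i * f i x) * (\<Sum>j<d. \<beta> j * f j x))
      = (\<Sum>x<m. \<Sum>i<d. \<Sum>j<d. cnj (\<alpha> i) * \<beta> j * (cnj (f i x) * f j x))"
    by (simp add: sum_distrib_left sum_distrib_right mult_ac)
  also have "\<dots> = (\<Sum>i<d. \<Sum>x<m. \<Sum>j<d. cnj (\<alpha> i) * \<beta> j * (cnj (f i x) * f j x))"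
    by (rule sum.swap)
  also have "\<dots> = (\<Sum>i<d. \<Sum>j<d. \<Sum>x<m. cnj (\<alpha> i) * \<beta> j * (cnj (f i x) * f j x))"
    by (simp only: sum.swap[of _ "{..<m}" "{..<d}"])
  also have "\<dots> = (\<Sum>i<d. \<Sum>j<d. cnj (\<alpha> i) * \<beta> j * (\<Sum>x<m. cnj (f i x) * f j x))"
    by (simp add: sum_distrib_left)
  finally show ?thesis .
qed

lemma sum_bilin2:
  fixes \<alpha> \<beta> :: "nat \<Rightarrow> complex" and m d :: nat
  shows "(\<Sum>x<m. \<Sum>y<m. cnj (\<Sum>i<d. \<alpha> i * u i x * v i y) * (\<Sum>j<d. \<beta> j * u j x * v j y))
       = (\<Sum>i<d. \<Sum>j<d. cnj (\<alpha> i) * \<beta> j * (\<Sum>x<m. cnj (u i x) * u j x) * (\<Sum>y<m. cnj (v i y) * v j y))"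
proof -
  have "(\<Sum>x<m. \<Sum>y<m. cnj (\<Sum>i<d. \<alpha> i * u i x * v i y) * (\<Sum>j<d. \<beta> j * u j x * v j y))
     = (\<Sum>x<m. \<Sum>i<d. \<Sum>j<d. cnj (\<alpha> i * u i x) * (\<beta> j * u j x) * (\<Sum>y<m. cnj (v i y) * v j y))"
    by (subst sum_bilin) simp
  also have "\<dots> = (\<Sum>x<m. \<Sum>i<d. \<Sum>j<d. cnj (\<alpha> i) * \<beta> j * (\<Sum>y<m. cnj (v i y) * v j y) * (cnj (u i x) * u j x))"
    by (simp add: mult_ac)
  also have "\<dots> = (\<Sum>i<d. \<Sum>x<m. \<Sum>j<d. cnj (\<alpha> i) * \<beta> j * (\<Sum>y<m. cnj (v i y) * v j y) * (cnj (u i x) * u j x))"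
    by (rule sum.swap)
  also have "\<dots> = (\<Sum>i<d. \<Sum>j<d. \<Sum>x<m. cnj (\<alpha> i) * \<beta> j * (\<Sum>y<m. cnj (v i y) * v j y) * (cnj (u i x) * u j x))"
    by (simp only: sum.swap[of _ "{..<m}" "{..<d}"])
  also have "\<dots> = (\<Sum>i<d. \<Sum>j<d. cnj (\<alpha> i) * \<beta> j * (\<Sum>x<m. cnj (u i x) * u j x) * (\<Sum>y<m. cnj (v i y) * v j y))"
    by (simp add: sum_distrib_left mult_ac)
  finally show ?thesis .
qed

lemma cs_bound:
  fixes M :: "nat \<Rightarrow> complex" and \<psi> :: "nat \<Rightarrow> complex"
  shows "(cmod (\<Sum>a<d. M a * \<psi> a))\<^sup>2 \<le> (\<Sum>a<d. (cmod (M a))\<^sup>2) * (\<Sum>a<d. (cmod (\<psi> a))\<^sup>2)"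
proof -
  have "cmod (\<Sum>a<d. M a * \<psi> a) \<le> (\<Sum>a<d. cmod (M a) * cmod (\<psi> a))"
    by (rule order_trans[OF norm_sum]) (simp add: norm_mult)
  then have "(cmod (\<Sum>a<d. M a * \<psi> a))\<^sup>2 \<le> (\<Sum>a<d. cmod (M a) * cmod (\<psi> a))\<^sup>2"
    by (intro power_mono) auto
  also have "\<dots> \<le> (\<Sum>a<d. (cmod (M a))\<^sup>2) * (\<Sum>a<d. (cmod (\<psi> a))\<^sup>2)"
    by (rule Cauchy_Schwarz_ineq_sum)
  finally show ?thesis .
qed




theorem proposition1:
  fixes d :: nat and \<chi> :: "nat \<Rightarrow> nat \<Rightarrow> complex"
  assumes pure: "\<forall>i<d. unit_vector d (\<chi> i)"
    and lin_indep: "\<forall>c :: nat \<Rightarrow> complex.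
              (\<forall>j<d. (\<Sum>i<d. c i * \<chi> i j) = 0) \<longrightarrow> (\<forall>i<d. c i = 0)"
    and spanning: "\<forall>\<psi> :: nat \<Rightarrow> complex. \<exists>c :: nat \<Rightarrow> complex.
              \<forall>j<d. \<psi> j = (\<Sum>i<d. c i * \<chi> i j)"
  shows "\<exists>\<Gamma>. isometry d (d * d) \<Gamma> \<and>
           (\<forall>\<rho>. density_op d \<rho> \<longrightarrow> NN d \<chi> d \<rho> = SN d d (conj_by d \<Gamma> \<rho>))"
proof (cases "d = 0")
  case True
  then show ?thesis unfolding density_op_def isometry_def by simp
next
  case False
  then have dpos: "d > 0" by simp
  have "\<forall>a. \<exists>c. \<forall>j<d. (if j = a then 1 else 0) = (\<Sum>i<d. c i * \<chi> i j)"
    by (intro allI) (rule spanning[rule_format])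
  from choice[OF this] obtain Mf where Mf: "\<forall>a. \<forall>j<d. (if j = a then 1 else 0) = (\<Sum>i<d. Mf a i * \<chi> i j)"
    by blast
  define M where "M = (\<lambda>i a. Mf a i)"
  have M: "\<And>a j. j < d \<Longrightarrow> (\<Sum>i<d. M i a * \<chi> i j) = (if j = a then 1 else 0)"
    using Mf unfolding M_def by simp
  define co where "co = (\<lambda>\<psi> i. \<Sum>a<d. M i a * \<psi> a)"
  have coR: "\<psi> j = (\<Sum>i<d. co \<psi> i * \<chi> i j)" if "j < d" for \<psi> j
  proof -
    have "(\<Sum>i<d. co \<psi> i * \<chi> i j) = (\<Sum>i<d. \<Sum>a<d. \<psi> a * (M i a * \<chi> i j))"
      unfolding co_def by (simp add: sum_distrib_right sum_distrib_left mult_ac)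
    also have "\<dots> = (\<Sum>a<d. \<Sum>i<d. \<psi> a * (M i a * \<chi> i j))" by (rule sum.swap)
    also have "\<dots> = (\<Sum>a<d. \<psi> a * (if j = a then 1 else 0))"
      using M[OF that] by (simp add: sum_distrib_left[symmetric])
    also have "\<dots> = \<psi> j" using that by (simp add: mult_ind1)
    finally show ?thesis by simp
  qed
  have coU: "co \<psi> i = c i" if "\<forall>j<d. \<psi> j = (\<Sum>i<d. c i * \<chi> i j)" "i < d" for \<psi> c i
  proof -
    have "\<forall>j<d. (\<Sum>i<d. (co \<psi> i - c i) * \<chi> i j) = 0"
      using that(1) coR by (simp add: left_diff_distrib sum_subtractf)
    then have "\<forall>i<d. co \<psi> i - c i = 0" using lin_indep[rule_format, of "\<lambda>i. co \<psi> i - c i"] by simp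
    then show ?thesis using that(2) by simp
  qed
  define K where "K = (\<Sum>i<d. \<Sum>a<d. (cmod (M i a))\<^sup>2)"
  have Kbound: "(\<Sum>i<d. (cmod (c i))\<^sup>2) \<le> K * (\<Sum>x<d. (cmod (\<Sum>i<d. c i * \<chi> i x))\<^sup>2)" for c
  proof -
    define \<psi> where "\<psi> = (\<lambda>x. \<Sum>i<d. c i * \<chi> i x)"
    have "(\<Sum>i<d. (cmod (c i))\<^sup>2) = (\<Sum>i<d. (cmod (co \<psi> i))\<^sup>2)"
      using coU[of \<psi> c] unfolding \<psi>_def by simp
    also have "\<dots> \<le> (\<Sum>i<d. (\<Sum>a<d. (cmod (M i a))\<^sup>2) * (\<Sum>a<d. (cmod (\<psi> a))\<^sup>2))"
      unfolding co_def by (intro sum_mono cs_bound)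
    also have "\<dots> = K * (\<Sum>x<d. (cmod (\<Sum>i<d. c i * \<chi> i x))\<^sup>2)"
      unfolding K_def \<psi>_def by (simp add: sum_distrib_right)
    finally show ?thesis .
  qed
  have Kpos: "K > 0"
  proof -
    have "(\<Sum>i<d. M i 0 * \<chi> i 0) = 1" using M[of 0 0] dpos by simp
    then obtain i where "i < d" "M i 0 \<noteq> 0"
    proof (cases "\<exists>i<d. M i 0 \<noteq> 0")
      case False
      then have "(\<Sum>i<d. M i 0 * \<chi> i 0) = 0" by (intro sum.neutral) auto
      then show ?thesis using \<open>(\<Sum>i<d. M i 0 * \<chi> i 0) = 1\<close> by simp
    qed auto
    then have "0 < (\<Sum>a<d. (cmod (M i a))\<^sup>2)"
      using dpos by (intro sum_pos2[of _ 0]) auto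
    also have "\<dots> \<le> K" unfolding K_def
      using \<open>i < d\<close> by (intro member_le_sum) (auto intro: sum_nonneg)
    finally show ?thesis .
  qed
  define \<sigma> :: real where "\<sigma> = 2 * K + real d * K\<^sup>2"
  define t :: real where "t = 1 / \<sigma> - 1 / (1 + \<sigma>)"
  have dK: "real d * K\<^sup>2 \<ge> 0" by simp
  have \<sigma>pos: "\<sigma> > 0" using Kpos dK unfolding \<sigma>_def by linarith
  have \<sigma>K: "\<sigma> \<ge> K" using Kpos dK unfolding \<sigma>_def by linarith
  define Gm where "Gm = (\<lambda>i j. \<Sum>x<d. cnj (\<chi> i x) * \<chi> j x)"
  define Am where "Am = (\<lambda>i j. Gm i j / complex_of_real \<sigma> - (if i = j then complex_of_real t else 0))"
  have Gherm: "Gm j i = cnj (Gm i j)" for i j unfolding Gm_def by (simp add: mult.commute)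
  have Gdiag: "Gm i i = 1" if "i < d" for i
    using pure that unfolding unit_ip ip_def Gm_def by simp
  have Aherm: "\<forall>i<d. \<forall>j<d. Am j i = cnj (Am i j)"
  proof (intro allI impI)
    fix i j show "Am j i = cnj (Am i j)" unfolding Am_def by (simp add: Gherm[of i j])
  qed
  have quadG: "(\<Sum>i<d. \<Sum>j<d. cnj (c i) * Gm i j * c j) = complex_of_real (\<Sum>x<d. (cmod (\<Sum>i<d. c i * \<chi> i x))\<^sup>2)" for c
  proof -
    have "(\<Sum>i<d. \<Sum>j<d. cnj (c i) * Gm i j * c j) = (\<Sum>i<d. \<Sum>j<d. cnj (c i) * c j * Gm i j)"
      by (simp add: mult_ac)
    also have "\<dots> = (\<Sum>x<d. cnj (\<Sum>i<d. c i * \<chi> i x) * (\<Sum>j<d. c j * \<chi> j x))"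
      unfolding Gm_def by (rule sum_bilin[symmetric])
    also have "\<dots> = ip d (\<lambda>x. \<Sum>i<d. c i * \<chi> i x) (\<lambda>x. \<Sum>i<d. c i * \<chi> i x)" unfolding ip_def ..
    finally show ?thesis unfolding ip_self .
  qed
  have quadA: "(\<Sum>i<d. \<Sum>j<d. cnj (c i) * Am i j * c j)
      = complex_of_real ((\<Sum>x<d. (cmod (\<Sum>i<d. c i * \<chi> i x))\<^sup>2) / \<sigma> - t * (\<Sum>i<d. (cmod (c i))\<^sup>2))" for c
  proof -
    have pt: "cnj (c i) * Am i j * c j = cnj (c i) * Gm i j * c j / complex_of_real \<sigma>
        - (if i = j then complex_of_real t * (cnj (c i) * c i) else 0)" for i j
      unfolding Am_def by (auto simp: algebra_simps)
    have "(\<Sum>i<d. \<Sum>j<d. cnj (c i) * Am i j * c j)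
       = (\<Sum>i<d. \<Sum>j<d. cnj (c i) * Gm i j * c j) / complex_of_real \<sigma> - complex_of_real t * ip d c c"
      unfolding pt sum_subtractf sum_divide_distrib[symmetric] ip_def
      by (simp add: sum_distrib_left)
    then show ?thesis unfolding quadG ip_self by simp
  qed
  have Apd: "\<forall>c. (\<exists>i<d. c i \<noteq> 0) \<longrightarrow> Re (\<Sum>i<d. \<Sum>j<d. cnj (c i) * Am i j * c j) > 0"
  proof (intro allI impI)
    fix c :: "nat \<Rightarrow> complex" assume "\<exists>i<d. c i \<noteq> 0"
    then obtain i0 where i0: "i0 < d" "c i0 \<noteq> 0" by auto
    define N where "N = (\<Sum>i<d. (cmod (c i))\<^sup>2)"
    define Nx where "Nx = (\<Sum>x<d. (cmod (\<Sum>i<d. c i * \<chi> i x))\<^sup>2)"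
    have Npos: "N > 0" unfolding N_def using i0 by (intro sum_pos2[of _ i0]) auto
    have NK: "N \<le> K * Nx" unfolding N_def Nx_def by (rule Kbound)
    have "Nx \<ge> 0" unfolding Nx_def by (intro sum_nonneg) auto
    moreover have "Nx \<noteq> 0" using NK Npos by auto
    ultimately have Nxpos: "Nx > 0" by simp
    have "N < (1 + \<sigma>) * Nx"
    proof -
      have "K * Nx < (1 + \<sigma>) * Nx" using \<sigma>K Nxpos by (intro mult_strict_right_mono) auto
      then show ?thesis using NK by linarith
    qed
    then have "N / (1 + \<sigma>) < Nx" using \<sigma>pos by (simp add: divide_less_eq mult.commute)
    then have "N / (1 + \<sigma>) / \<sigma> < Nx / \<sigma>" using \<sigma>pos by (rule divide_strict_right_mono)
    moreover have "t * N = N / (1 + \<sigma>) / \<sigma>" unfolding t_def using \<sigma>pos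
      by (simp add: field_simps)
    ultimately have "t * N < Nx / \<sigma>" by simp
    then show "Re (\<Sum>i<d. \<Sum>j<d. cnj (c i) * Am i j * c j) > 0"
      unfolding quadA N_def[symmetric] Nx_def[symmetric] by simp
  qed
  obtain u where ugram: "\<forall>i<d. \<forall>j<d. (\<Sum>k<d. cnj (u i k) * u j k) = Am i j"
    using chol[rule_format, of d Am] Aherm Apd by blast
  have indep_u: "\<forall>c :: nat \<Rightarrow> complex. (\<forall>x<d. (\<Sum>i<d. c i * u i x) = 0) \<longrightarrow> (\<forall>i<d. c i = 0)"
  proof (rule allI, rule impI)
    fix c :: "nat \<Rightarrow> complex" assume z: "\<forall>x<d. (\<Sum>i<d. c i * u i x) = 0"
    have "(\<Sum>i<d. \<Sum>j<d. cnj (c i) * Am i j * c j) = (\<Sum>i<d. \<Sum>j<d. cnj (c i) * c j * (\<Sum>k<d. cnj (u i k) * u j k))"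
      using ugram by (simp add: mult_ac)
    also have "\<dots> = (\<Sum>x<d. cnj (\<Sum>i<d. c i * u i x) * (\<Sum>j<d. c j * u j x))"
      by (rule sum_bilin[symmetric])
    also have "\<dots> = 0" using z by simp
    finally have "Re (\<Sum>i<d. \<Sum>j<d. cnj (c i) * Am i j * c j) = 0" by simp
    show "\<forall>i<d. c i = 0"
    proof (rule ccontr)
      assume "\<not> (\<forall>i<d. c i = 0)"
      then have "\<exists>i<d. c i \<noteq> 0" by auto
      then have "Re (\<Sum>i<d. \<Sum>j<d. cnj (c i) * Am i j * c j) > 0" using Apd by blast
      then show False using \<open>Re (\<Sum>i<d. \<Sum>j<d. cnj (c i) * Am i j * c j) = 0\<close> by simp
    qed
  qed
  define v where "v = (\<lambda>i y. if y < d then (if y = i then 1 else 0) + complex_of_real K else 0)"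
  have vgram: "(\<Sum>y<d. cnj (v i y) * v j y) = (if i = j then 1 else 0) + complex_of_real \<sigma>"
    if ij: "i < d" "j < d" for i j
  proof -
    have "(\<Sum>y<d. cnj (v i y) * v j y)
       = (\<Sum>y<d. (if y = i then 1 else 0) * (if y = j then 1 else 0)
            + (complex_of_real K * (if y = i then 1 else 0) + complex_of_real K * (if y = j then 1 else 0))
            + complex_of_real K * complex_of_real K)"
      unfolding v_def by (intro sum.cong refl) (simp add: algebra_simps)
    also have "\<dots> = (if i = j then 1 else 0) + (complex_of_real K + complex_of_real K)
        + of_nat d * (complex_of_real K * complex_of_real K)"
      using ij by (simp add: sum.distrib sum_distrib_left[symmetric] mult_ind1 mult_ind2)
    also have "\<dots> = (if i = j then 1 else 0) + complex_of_real \<sigma>"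
      unfolding \<sigma>_def by (simp add: power2_eq_square)
    finally show ?thesis .
  qed
  have dual: "\<forall>i<d. \<exists>w. \<forall>i'<d. (\<Sum>y<d. v i' y * w y) = (if i' = i then 1 else 0)"
  proof (intro allI impI)
    fix i assume i: "i < d"
    define \<gamma> where "\<gamma> = K / (1 + real d * K)"
    have den: "1 + real d * K > 0" using Kpos by (simp add: add_pos_nonneg)
    have g: "K - \<gamma> - real d * K * \<gamma> = 0" unfolding \<gamma>_def using den by (simp add: field_simps)
    show "\<exists>w. \<forall>i'<d. (\<Sum>y<d. v i' y * w y) = (if i' = i then 1 else 0)"
    proof (intro exI allI impI)
      fix i' assume i': "i' < d"
      have "(\<Sum>y<d. v i' y * ((if y = i then 1 else 0) - complex_of_real \<gamma>))
        = (\<Sum>y<d. (if y = i' then 1 else 0) * (if y = i then 1 else 0) + complex_of_real K * (if y = i then 1 else 0)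
              - (complex_of_real \<gamma> * (if y = i' then 1 else 0)) - complex_of_real K * complex_of_real \<gamma>)"
        unfolding v_def by (intro sum.cong refl) (simp add: algebra_simps)
      also have "\<dots> = (if i' = i then 1 else 0) + complex_of_real K - complex_of_real \<gamma>
           - of_nat d * (complex_of_real K * complex_of_real \<gamma>)"
        using i i' by (simp add: sum.distrib sum_subtractf sum_distrib_left[symmetric] mult_ind1 mult_ind2)
      also have "\<dots> = (if i' = i then 1 else 0) + complex_of_real (K - \<gamma> - real d * K * \<gamma>)" by simp
      also have "\<dots> = (if i' = i then 1 else 0)" unfolding g by simp
      finally show "(\<Sum>y<d. v i' y * ((\<lambda>y. (if y = i then 1 else 0) - complex_of_real \<gamma>) y)) = (if i' = i then 1 else 0)"
        by simp
    qed
  qed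
  have ABG: "Am i j * ((if i = j then 1 else 0) + complex_of_real \<sigma>) = Gm i j" if ij: "i < d" "j < d" for i j
  proof (cases "i = j")
    case True
    have "Am i j = complex_of_real (1 / \<sigma> - t)" using True Gdiag[OF ij(1)] unfolding Am_def
      by (simp add: of_real_divide)
    also have "1 / \<sigma> - t = 1 / (1 + \<sigma>)" unfolding t_def by simp
    finally have A1: "Am i j = complex_of_real (1 / (1 + \<sigma>))" .
    have e: "(if i = j then 1 else 0) + complex_of_real \<sigma> = complex_of_real (1 + \<sigma>)" using True by simp
    have "1 / (1 + \<sigma>) * (1 + \<sigma>) = 1" using \<sigma>pos by simp
    then show ?thesis unfolding A1 e of_real_mult[symmetric] using True Gdiag[OF ij(1)] by simp
  next
    case False
    then show ?thesis using \<sigma>pos unfolding Am_def by simp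
  qed
  define Gam where "Gam = (\<lambda>k a. \<Sum>i<d. M i a * u i (k div d) * v i (k mod d))"
  have app_eq: "app d Gam \<psi> = (\<lambda>k. \<Sum>i<d. co \<psi> i * u i (k div d) * v i (k mod d))" for \<psi>
  proof
    fix k
    have "app d Gam \<psi> k = (\<Sum>a<d. \<Sum>i<d. M i a * \<psi> a * (u i (k div d) * v i (k mod d)))"
      unfolding app_def Gam_def by (simp add: sum_distrib_right sum_distrib_left mult_ac)
    also have "\<dots> = (\<Sum>i<d. \<Sum>a<d. M i a * \<psi> a * (u i (k div d) * v i (k mod d)))" by (rule sum.swap)
    also have "\<dots> = (\<Sum>i<d. co \<psi> i * u i (k div d) * v i (k mod d))"
      unfolding co_def by (simp add: sum_distrib_right sum_distrib_left mult_ac)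
    finally show "app d Gam \<psi> k = (\<Sum>i<d. co \<psi> i * u i (k div d) * v i (k mod d))" .
  qed
  have hSR: "SR d d (app d Gam \<psi>) = NR d \<chi> d \<psi>" for \<psi>
  proof -
    have "SR d d (app d Gam \<psi>) = card {i. i < d \<and> co \<psi> i \<noteq> 0}"
      unfolding app_eq by (rule SR_char[OF indep_u dual])
    also have "\<dots> = NR d \<chi> d \<psi>"
      by (rule NR_char[OF lin_indep, symmetric]) (use coR in auto)
    finally show ?thesis .
  qed
  have iso: "isometry d (d * d) Gam"
    unfolding isometry_def
  proof (intro allI impI)
    fix a b assume ab: "a < d" "b < d"
    have "(\<Sum>k<d * d. cnj (Gam k a) * Gam k b)
        = (\<Sum>x<d. \<Sum>y<d. cnj (Gam (x * d + y) a) * Gam (x * d + y) b)" by (rule sum_dd)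
    also have "\<dots> = (\<Sum>x<d. \<Sum>y<d. cnj (\<Sum>i<d. M i a * u i x * v i y) * (\<Sum>j<d. M j b * u j x * v j y))"
      unfolding Gam_def using divmod by (intro sum.cong refl) auto
    also have "\<dots> = (\<Sum>i<d. \<Sum>j<d. cnj (M i a) * M j b * (\<Sum>x<d. cnj (u i x) * u j x) * (\<Sum>y<d. cnj (v i y) * v j y))"
      by (rule sum_bilin2)
    also have "\<dots> = (\<Sum>i<d. \<Sum>j<d. cnj (M i a) * M j b * Gm i j)"
    proof (intro sum.cong refl)
      fix i j assume "i \<in> {..<d}" "j \<in> {..<d}"
      then show "cnj (M i a) * M j b * (\<Sum>x<d. cnj (u i x) * u j x) * (\<Sum>y<d. cnj (v i y) * v j y)
          = cnj (M i a) * M j b * Gm i j"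
        using ugram vgram ABG[symmetric] by (simp add: mult.assoc)
    qed
    also have "\<dots> = (\<Sum>x<d. cnj (\<Sum>i<d. M i a * \<chi> i x) * (\<Sum>j<d. M j b * \<chi> j x))"
      unfolding Gm_def by (rule sum_bilin[symmetric])
    also have "\<dots> = (\<Sum>x<d. (if x = a then 1 else 0) * (if x = b then 1 else 0))"
      using M by (intro sum.cong refl) auto
    also have "\<dots> = (if a = b then 1 else 0)" using ab by (simp add: mult_ind1)
    finally show "(\<Sum>k<d * d. cnj (Gam k a) * Gam k b) = (if a = b then 1 else 0)" .
  qed
  show ?thesis using iso NN_SN_gen[OF iso hSR] by blast
qed


end
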